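(* Let $\mathfrak L$ be a GNN layer of input dimension $p$. Then there is a $\gamma\in\mathbb N_{>0}$ such that for all graphs $G$, all signals $\mathcal x:V(G)\to\mathbb R^p$, and all vertices $v\in V(G)$, $$\|\tilde{\mathfrak L}(G,\mathcal x)(v)\|_\infty\le\gamma\cdot\big(\|\mathcal x|_{N[v]}\|_\infty+1\big)\max\{\deg(v),1\}\le\gamma\cdot(\|\mathcal x\|_\infty+1)|G|.$$
   Context: Graphs are finite, simple, undirected with nonempty vertex set; $N(v)$ is the neighbourhood, $N[v]=N(v)\cup\{v\}$, $\deg(v)=|N(v)|$, $|G|=|V(G)|$. For a signal $\mathcal x$ and $W\subseteq V(G)$, $\|\mathcal x|_W\|_\infty=\max_{w\in W}\|\mathcal x(w)\|_\infty$ and $\|\mathcal x\|_\infty=\|\mathcal x|_{V(G)}\|_\infty$. An FNN has a finite dag skeleton, Lipschitz continuous activation functions $\mathfrak a_v$, real weights $w_e$ and biases $b_v$; sources are inputs, sinks outputs, a non-input node computes $\mathfrak a_v(b_v+\sum_{uv\in E}w_{uv}\cdot\text{value}(u))$. A GNN layer $\mathfrak L=(\mathrm{msg},\mathrm{agg},\mathrm{comb})$ of input dimension $p$ has $\mathrm{msg}:\mathbb R^{2p}\to\mathbb R^r$ and $\mathrm{comb}:\mathbb R^{p+r}\to\mathbb R^q$ computed by FNNs and $\mathrm{agg}$ coordinatewise sum, mean or maximum of finite multisets (value $\mathbf 0$ on the empty multiset); $\tilde{\mathfrak L}(G,\mathcal x)(v)=\mathrm{comb}\big(\mathcal x(v),\mathrm{agg}\{\!\{\mathrm{msg}(\mathcal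 x(v),\mathcal x(w)):w\in N(v)\}\!\}\big)$. *)

theory Defs
  imports "HOL-Analysis.Analysis" "HOL-Library.Multiset"
begin

text \<open>An FNN skeleton is a finite dag; its nodes are numbered 0..<fnn_n in a
topological order (every edge (u,w) has u < w). The inputs (sources) and outputs
(sinks) are listed in a fixed order, which fixes how the FNN computes a map
R^m -> R^k (vectors are real lists).\<close>

record fnn =
  fnn_n    :: nat
  fnn_edges :: "(nat \<times> nat) set"
  fnn_w    :: "nat \<Rightarrow> nat \<Rightarrow> real"
  fnn_b    :: "nat \<Rightarrow> real"
  fnn_act  :: "nat \<Rightarrow> real \<Rightarrow> real"
  fnn_inp  :: "nat list"
  fnn_outp :: "nat list"

definition fnn_wf :: "fnn \<Rightarrow> bool" where
  "fnn_wf N \<longleftrightarrow>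
     fnn_edges N \<subseteq> {(u, w). u < w \<and> w < fnn_n N} \<and>
     distinct (fnn_inp N) \<and>
     set (fnn_inp N) = {w. w < fnn_n N \<and> (\<forall>u. (u, w) \<notin> fnn_edges N)} \<and>
     distinct (fnn_outp N) \<and>
     set (fnn_outp N) = {u. u < fnn_n N \<and> (\<forall>w. (u, w) \<notin> fnn_edges N)} \<and>
     (\<forall>w < fnn_n N. w \<notin> set (fnn_inp N) \<longrightarrow> (\<exists>C. C-lipschitz_on UNIV (fnn_act N w)))"

function fnn_node :: "fnn \<Rightarrow> real list \<Rightarrow> nat \<Rightarrow> real" where
  "fnn_node N xs w =
     (if w \<in> set (fnn_inp N) then xs ! (THE i. i < length (fnn_inp N) \<and> fnn_inp N ! i = w)
      else fnn_act N w (fnn_b N w +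
         (\<Sum>u\<in>{u. u < w \<and> (u, w) \<in> fnn_edges N}. fnn_w N u w * fnn_node N xs u)))"
  by pat_completeness auto
termination by (relation "Wellfounded.measure (\<lambda>(N, xs, w). w)") auto

declare fnn_node.simps[simp del]

definition fnn_fun :: "fnn \<Rightarrow> real list \<Rightarrow> real list" where
  "fnn_fun N xs = map (fnn_node N xs) (fnn_outp N)"

datatype aggr = AggSum | AggMean | AggMax

definition aggregate :: "aggr \<Rightarrow> nat \<Rightarrow> real list multiset \<Rightarrow> real list" where
  "aggregate a r M =
     (if M = {#} then replicate r 0
      else map (\<lambda>i. let Mi = image_mset (\<lambda>y. y ! i) M in
                  (case a of AggSum \<Rightarrow> sum_mset Mi
                           | AggMean \<Rightarrow> sum_mset Mi / real (size Mi)
                           | AggMax \<Rightarrow> Max (set_mset Mi))) [0..<r])"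

record gnn_layer =
  gl_p    :: nat
  gl_msg  :: fnn
  gl_agg  :: aggr
  gl_comb :: fnn

definition gl_r :: "gnn_layer \<Rightarrow> nat" where
  "gl_r L = length (fnn_outp (gl_msg L))"

definition gnn_layer_wf :: "gnn_layer \<Rightarrow> bool" where
  "gnn_layer_wf L \<longleftrightarrow>
     fnn_wf (gl_msg L) \<and> length (fnn_inp (gl_msg L)) = 2 * gl_p L \<and>
     fnn_wf (gl_comb L) \<and> length (fnn_inp (gl_comb L)) = gl_p L + gl_r L"

text \<open>Finite simple undirected graphs with nonempty vertex set; vertices are naturals
(every finite graph is isomorphic to such a graph).\<close>
definition graph :: "nat set \<Rightarrow> (nat \<times> nat) set \<Rightarrow> bool" where
  "graph V E \<longleftrightarrow> finite V \<and> V \<noteq> {} \<and> E \<subseteq> V \<times> V \<and> sym E \<and> (\<forall>v. (v, v) \<notin> E)"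

definition nbhd :: "nat set \<Rightarrow> (nat \<times> nat) set \<Rightarrow> nat \<Rightarrow> nat set" where
  "nbhd V E v = {w \<in> V. (v, w) \<in> E}"

definition cnbhd :: "nat set \<Rightarrow> (nat \<times> nat) set \<Rightarrow> nat \<Rightarrow> nat set" where
  "cnbhd V E v = insert v (nbhd V E v)"

definition deg :: "nat set \<Rightarrow> (nat \<times> nat) set \<Rightarrow> nat \<Rightarrow> nat" where
  "deg V E v = card (nbhd V E v)"

text \<open>Infinity norm of a vector in R^p (0 for p = 0).\<close>
definition linf :: "real list \<Rightarrow> real" where
  "linf xs = Max (insert 0 (abs ` set xs))"

text \<open>Infinity norm of a signal restricted to W (W finite, nonempty).\<close>
definition sig_norm :: "(nat \<Rightarrow> real list) \<Rightarrow> nat set \<Rightarrow> real" where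
  "sig_norm x W = Max ((\<lambda>w. linf (x w)) ` W)"

definition layer_apply ::
  "gnn_layer \<Rightarrow> nat set \<Rightarrow> (nat \<times> nat) set \<Rightarrow> (nat \<Rightarrow> real list) \<Rightarrow> nat \<Rightarrow> real list" where
  "layer_apply L V E x v =
     fnn_fun (gl_comb L)
       (x v @ aggregate (gl_agg L) (gl_r L)
                (image_mset (\<lambda>w. fnn_fun (gl_msg L) (x v @ x w)) (mset_set (nbhd V E v))))"

end

theory Submission
  imports Defs
begin

lemma linf_ge0: "0 \<le> linf xs"
  unfolding linf_def by (simp add: Max_ge_iff)

lemma linf_nth: "i < length xs \<Longrightarrow> \<bar>xs ! i\<bar> \<le> linf xs"
  unfolding linf_def by (simp add: Max_ge_iff)

lemma linf_le: "(\<And>y. y \<in> set xs \<Longrightarrow> \<bar>y\<bar> \<le> B) \<Longrightarrow> 0 \<le> B \<Longrightarrow> linf xs \<le> B"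
  unfolding linf_def by (simp add: Max_le_iff)

lemma fnn_node_bound:
  assumes wf: "fnn_wf N"
  shows "\<exists>K\<ge>0. \<forall>xs. length xs = length (fnn_inp N) \<longrightarrow>
           (\<forall>w<fnn_n N. \<bar>fnn_node N xs w\<bar> \<le> K * (linf xs + 1))"
proof -
  have "\<forall>m\<le>fnn_n N. \<exists>K\<ge>0. \<forall>xs. length xs = length (fnn_inp N) \<longrightarrow>
           (\<forall>w<m. \<bar>fnn_node N xs w\<bar> \<le> K * (linf xs + 1))"
  proof (intro allI impI)
    fix m assume "m \<le> fnn_n N"
    then show "\<exists>K\<ge>0. \<forall>xs. length xs = length (fnn_inp N) \<longrightarrow>
           (\<forall>w<m. \<bar>fnn_node N xs w\<bar> \<le> K * (linf xs + 1))"
    proof (induction m)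
      case 0
      show ?case by auto
    next
      case (Suc m)
      then obtain K where K0: "K \<ge> 0" and
        K: "\<And>xs w. length xs = length (fnn_inp N) \<Longrightarrow> w < m \<Longrightarrow> \<bar>fnn_node N xs w\<bar> \<le> K * (linf xs + 1)"
        by auto
      have "\<exists>Km\<ge>0. \<forall>xs. length xs = length (fnn_inp N) \<longrightarrow> \<bar>fnn_node N xs m\<bar> \<le> Km * (linf xs + 1)"
      proof (cases "m \<in> set (fnn_inp N)")
        case True
        show ?thesis
        proof (intro exI[of _ 1] conjI allI impI)
          fix xs :: "real list" assume len: "length xs = length (fnn_inp N)"
          have "distinct (fnn_inp N)" using wf unfolding fnn_wf_def by blast
          then have ex: "\<exists>!i. i < length (fnn_inp N) \<and> fnn_inp N ! i = m"
            using True distinct_Ex1 by metis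
          let ?i = "THE i. i < length (fnn_inp N) \<and> fnn_inp N ! i = m"
          have "?i < length (fnn_inp N)" using theI'[OF ex] by blast
          then have "\<bar>xs ! ?i\<bar> \<le> linf xs" using len linf_nth by simp
          moreover have "fnn_node N xs m = xs ! ?i"
            using True by (simp add: fnn_node.simps[of N xs m])
          ultimately show "\<bar>fnn_node N xs m\<bar> \<le> 1 * (linf xs + 1)" by simp
        qed simp
      next
        case False
        have "m < fnn_n N" using Suc.prems by simp
        then obtain C where C: "C-lipschitz_on UNIV (fnn_act N m)"
          using wf False unfolding fnn_wf_def by blast
        have C0: "0 \<le> C" using C lipschitz_on_nonneg by blast
        define S where "S = {u. u < m \<and> (u, m) \<in> fnn_edges N}"
        define Sw where "Sw = (\<Sum>u\<in>S. \<bar>fnn_w N u m\<bar>)"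
        have Sw0: "0 \<le> Sw" unfolding Sw_def by (simp add: sum_nonneg)
        define Km where "Km = \<bar>fnn_act N m 0\<bar> + C * (\<bar>fnn_b N m\<bar> + K * Sw)"
        show ?thesis
        proof (intro exI[of _ Km] conjI allI impI)
          show "0 \<le> Km" using C0 K0 Sw0 by (simp add: Km_def)
          fix xs :: "real list" assume len: "length xs = length (fnn_inp N)"
          define l where "l = linf xs + 1"
          have l1: "1 \<le> l" using linf_ge0[of xs] by (simp add: l_def)
          define t where "t = fnn_b N m + (\<Sum>u\<in>S. fnn_w N u m * fnn_node N xs u)"
          have node: "fnn_node N xs m = fnn_act N m t"
            using False by (simp add: fnn_node.simps[of N xs m] t_def S_def)
          have "\<bar>\<Sum>u\<in>S. fnn_w N u m * fnn_node N xs u\<bar> \<le> (\<Sum>u\<in>S. \<bar>fnn_w N u m\<bar> * (K * l))"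
          proof (rule order_trans[OF sum_abs], rule sum_mono)
            fix u assume "u \<in> S"
            then have "\<bar>fnn_node N xs u\<bar> \<le> K * l" using K[OF len] by (simp add: S_def l_def)
            then show "\<bar>fnn_w N u m * fnn_node N xs u\<bar> \<le> \<bar>fnn_w N u m\<bar> * (K * l)"
              by (simp add: abs_mult mult_left_mono)
          qed
          also have "\<dots> = K * Sw * l" by (simp add: Sw_def sum_distrib_left sum_distrib_right mult_ac)
          finally have "\<bar>t\<bar> \<le> \<bar>fnn_b N m\<bar> + K * Sw * l" unfolding t_def by linarith
          also have "\<dots> \<le> (\<bar>fnn_b N m\<bar> + K * Sw) * l"
            using l1 by (simp add: distrib_right mult_le_cancel_left1)
          finally have tb: "\<bar>t\<bar> \<le> (\<bar>fnn_b N m\<bar> + K * Sw) * l" .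
          have "dist (fnn_act N m t) (fnn_act N m 0) \<le> C * dist t 0"
            using lipschitz_onD[OF C] by blast
          then have "\<bar>fnn_act N m t\<bar> \<le> \<bar>fnn_act N m 0\<bar> + C * \<bar>t\<bar>"
            by (simp add: dist_real_def)
          also have "\<dots> \<le> \<bar>fnn_act N m 0\<bar> * l + C * ((\<bar>fnn_b N m\<bar> + K * Sw) * l)"
            using l1 tb C0 by (intro add_mono mult_left_mono) (auto simp: mult_le_cancel_left1)
          also have "\<dots> = Km * l" by (simp add: Km_def algebra_simps)
          finally show "\<bar>fnn_node N xs m\<bar> \<le> Km * (linf xs + 1)" by (simp add: node l_def)
        qed
      qed
      then obtain Km where Km0: "Km \<ge> 0" and
        Km: "\<And>xs. length xs = length (fnn_inp N) \<Longrightarrow> \<bar>fnn_node N xs m\<bar> \<le> Km * (linf xs + 1)"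
        by auto
      show ?case
      proof (intro exI[of _ "max K Km"] conjI allI impI)
        fix xs :: "real list" and w assume len: "length xs = length (fnn_inp N)" and w: "w < Suc m"
        have l0: "0 \<le> linf xs + 1" using linf_ge0[of xs] by simp
        show "\<bar>fnn_node N xs w\<bar> \<le> max K Km * (linf xs + 1)"
        proof (cases "w < m")
          case True
          then show ?thesis using K[OF len True] l0
            by (meson max.cobounded1 mult_right_mono order_trans)
        next
          case False
          then have "w = m" using w by simp
          then show ?thesis using Km[OF len] l0
            by (meson max.cobounded2 mult_right_mono order_trans)
        qed
      qed (use K0 in simp)
    qed
  qed
  then show ?thesis by blast
qed

lemma fnn_fun_bound:
  assumes wf: "fnn_wf N"
  shows "\<exists>K\<ge>0. \<forall>xs. length xs = length (fnn_inp N) \<longrightarrow> linf (fnn_fun N xs) \<le> K * (linf xs + 1)"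
proof -
  obtain K where K0: "K \<ge> 0" and
    K: "\<And>xs w. length xs = length (fnn_inp N) \<Longrightarrow> w < fnn_n N \<Longrightarrow> \<bar>fnn_node N xs w\<bar> \<le> K * (linf xs + 1)"
    using fnn_node_bound[OF wf] by blast
  have outs: "\<And>w. w \<in> set (fnn_outp N) \<Longrightarrow> w < fnn_n N" using wf unfolding fnn_wf_def by blast
  show ?thesis
  proof (intro exI[of _ K] conjI allI impI)
    fix xs :: "real list" assume len: "length xs = length (fnn_inp N)"
    show "linf (fnn_fun N xs) \<le> K * (linf xs + 1)"
      unfolding fnn_fun_def
      using K[OF len] outs K0 linf_ge0[of xs] by (intro linf_le) auto
  qed (rule K0)
qed

lemma agg_bound:
  assumes fin: "finite N" and B0: "0 \<le> B"
    and f: "\<And>w. w \<in> N \<Longrightarrow> length (f w) = r \<and> linf (f w) \<le> B"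
  shows "linf (aggregate a r (image_mset f (mset_set N))) \<le> real (max (card N) 1) * B"
proof (cases "N = {}")
  case True
  then have "aggregate a r (image_mset f (mset_set N)) = replicate r 0" by (simp add: aggregate_def)
  then show ?thesis using B0 by (auto intro!: linf_le)
next
  case False
  then have ne: "image_mset f (mset_set N) \<noteq> {#}" using fin by (simp add: mset_set_empty_iff)
  have crd: "card N \<ge> 1" using False fin by (simp add: Suc_le_eq card_gt_0_iff)
  have mx: "real (max (card N) 1) = real (card N)" using crd by simp
  have B1: "B \<le> real (card N) * B" using crd B0
    by (metis mult_le_cancel_right1 of_nat_1 of_nat_le_iff order.strict_iff_not)
  have ag: "aggregate a r (image_mset f (mset_set N)) = map (\<lambda>i. let Mi = image_mset (\<lambda>y. y ! i) (image_mset f (mset_set N)) in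
                  (case a of AggSum \<Rightarrow> sum_mset Mi
                           | AggMean \<Rightarrow> sum_mset Mi / real (size Mi)
                           | AggMax \<Rightarrow> Max (set_mset Mi))) [0..<r]"
    unfolding aggregate_def using ne by (simp only: if_False)
  show ?thesis unfolding ag
  proof (intro linf_le)
    fix y assume "y \<in> set (map (\<lambda>i. let Mi = image_mset (\<lambda>y. y ! i) (image_mset f (mset_set N)) in
                  (case a of AggSum \<Rightarrow> sum_mset Mi
                           | AggMean \<Rightarrow> sum_mset Mi / real (size Mi)
                           | AggMax \<Rightarrow> Max (set_mset Mi))) [0..<r])"
    then obtain i where i: "i < r" and y: "y = (let Mi = image_mset (\<lambda>y. y ! i) (image_mset f (mset_set N)) in
                  (case a of AggSum \<Rightarrow> sum_mset Mi
                           | AggMean \<Rightarrow> sum_mset Mi / real (size Mi)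
                           | AggMax \<Rightarrow> Max (set_mset Mi)))" by auto
    define g where "g = (\<lambda>w. f w ! i)"
    have Mi: "image_mset (\<lambda>y. y ! i) (image_mset f (mset_set N)) = image_mset g (mset_set N)"
      by (simp add: g_def multiset.map_comp comp_def)
    have gb: "\<bar>g w\<bar> \<le> B" if "w \<in> N" for w
    proof -
      have "length (f w) = r" "linf (f w) \<le> B" using f[OF that] by auto
      then show ?thesis using i linf_nth[of i "f w"] unfolding g_def by linarith
    qed
    have "(\<Sum>w\<in>N. \<bar>g w\<bar>) \<le> real (card N) * B"
      using sum_bounded_above[of N "\<lambda>w. \<bar>g w\<bar>" B] gb by blast
    then have sb: "\<bar>sum g N\<bar> \<le> real (card N) * B"
      using sum_abs[of g N] by linarith
    have sm: "sum_mset (image_mset g (mset_set N)) = sum g N" by (rule sum_unfold_sum_mset[symmetric])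
    have sz: "size (image_mset g (mset_set N)) = card N" by simp
    show "\<bar>y\<bar> \<le> real (max (card N) 1) * B"
      unfolding mx
    proof (cases a)
      case AggSum
      have "y = sum_mset (image_mset g (mset_set N))" using y AggSum unfolding Mi by (simp only: Let_def aggr.case)
      then show "\<bar>y\<bar> \<le> real (card N) * B" using sm sb by (simp only:)
    next
      case AggMean
      have "\<bar>sum g N / real (card N)\<bar> \<le> B"
      proof -
        have c0: "0 < real (card N)" using crd by simp
        have "\<bar>sum g N\<bar> / real (card N) \<le> B" using pos_divide_le_eq[OF c0] sb by (metis mult.commute)
        then show ?thesis using c0 by (simp add: abs_divide)
      qed
      have "y = sum_mset (image_mset g (mset_set N)) / real (size (image_mset g (mset_set N)))" using y AggMean unfolding Mi by (simp only: Let_def aggr.case)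
      then have "y = sum g N / real (card N)" by (simp only: sm sz)
      then show "\<bar>y\<bar> \<le> real (card N) * B" using B1 \<open>\<bar>sum g N / real (card N)\<bar> \<le> B\<close> by linarith
    next
      case AggMax
      have "Max (g ` N) \<in> g ` N" using fin False by (intro Max_in) auto
      then have "\<bar>Max (g ` N)\<bar> \<le> B" using gb by auto
      have "y = Max (set_mset (image_mset g (mset_set N)))" using y AggMax unfolding Mi by (simp only: Let_def aggr.case)
      then have "y = Max (g ` N)" using fin by simp
      then show "\<bar>y\<bar> \<le> real (card N) * B" using B1 \<open>\<bar>Max (g ` N)\<bar> \<le> B\<close> by linarith
    qed
  next
    show "0 \<le> real (max (card N) 1) * B" using B0 by simp
  qed
qed

lemma linf_mem: "y \<in> set xs \<Longrightarrow> \<bar>y\<bar> \<le> linf xs"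
  unfolding linf_def by (simp add: Max_ge_iff)

lemma length_aggregate: "length (aggregate a r M) = r"
  by (simp add: aggregate_def)

lemma length_fnn_fun: "length (fnn_fun N xs) = length (fnn_outp N)"
  by (simp add: fnn_fun_def)

theorem lemma4p2:
  fixes L :: gnn_layer
  assumes "gnn_layer_wf L"
  shows "\<exists>\<gamma>::nat. \<gamma> > 0 \<and>
    (\<forall>V E x v. graph V E \<longrightarrow> (\<forall>u\<in>V. length (x u) = gl_p L) \<longrightarrow> v \<in> V \<longrightarrow>
       linf (layer_apply L V E x v)
         \<le> real \<gamma> * (sig_norm x (cnbhd V E v) + 1) * real (max (deg V E v) 1) \<and>
       real \<gamma> * (sig_norm x (cnbhd V E v) + 1) * real (max (deg V E v) 1)
         \<le> real \<gamma> * (sig_norm x V + 1) * real (card V))"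
proof -
  have wfm: "fnn_wf (gl_msg L)" and lm: "length (fnn_inp (gl_msg L)) = 2 * gl_p L"
    and wfc: "fnn_wf (gl_comb L)" and lc: "length (fnn_inp (gl_comb L)) = gl_p L + gl_r L"
    using assms unfolding gnn_layer_wf_def by auto
  obtain Km where Km0: "Km \<ge> 0" and
    Km: "\<And>xs. length xs = 2 * gl_p L \<Longrightarrow> linf (fnn_fun (gl_msg L) xs) \<le> Km * (linf xs + 1)"
    using fnn_fun_bound[OF wfm] lm by auto
  obtain Kc where Kc0: "Kc \<ge> 0" and
    Kc: "\<And>xs. length xs = gl_p L + gl_r L \<Longrightarrow> linf (fnn_fun (gl_comb L) xs) \<le> Kc * (linf xs + 1)"
    using fnn_fun_bound[OF wfc] lc by auto
  define \<gamma> where "\<gamma> = nat \<lceil>Kc * (Km + 1)\<rceil> + 1"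
  have \<gamma>: "Kc * (Km + 1) \<le> real \<gamma>" unfolding \<gamma>_def
    using real_nat_ceiling_ge[of "Kc * (Km + 1)"] by simp
  show ?thesis
  proof (intro exI[of _ \<gamma>] conjI allI impI)
    show "0 < \<gamma>" by (simp add: \<gamma>_def)
    fix V :: "nat set" and E :: "(nat \<times> nat) set" and x :: "nat \<Rightarrow> real list" and v :: nat
    assume G: "graph V E" and len: "\<forall>u\<in>V. length (x u) = gl_p L" and v: "v \<in> V"
    define s where "s = sig_norm x (cnbhd V E v)"
    define d where "d = deg V E v"
    define D where "D = real (max d 1)"
    have finV: "finite V" and noloop: "\<And>u. (u, u) \<notin> E" using G unfolding graph_def by auto
    have nbV: "nbhd V E v \<subseteq> V" by (auto simp: nbhd_def)
    have cnV: "cnbhd V E v \<subseteq> V" using nbV v by (auto simp: cnbhd_def)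
    have fincn: "finite (cnbhd V E v)" using cnV finV finite_subset by blast
    have finnb: "finite (nbhd V E v)" using nbV finV finite_subset by blast
    have vcn: "v \<in> cnbhd V E v" by (simp add: cnbhd_def)
    have xs: "linf (x w) \<le> s" if "w \<in> cnbhd V E v" for w
      unfolding s_def sig_norm_def using fincn that by (intro Max_ge) auto
    have s0: "0 \<le> s" using xs[OF vcn] linf_ge0[of "x v"] by linarith
    have D1: "1 \<le> D" by (simp add: D_def)
    have lxv: "length (x v) = gl_p L" using len v by blast
    have msgb: "length (fnn_fun (gl_msg L) (x v @ x w)) = gl_r L \<and>
                linf (fnn_fun (gl_msg L) (x v @ x w)) \<le> Km * (s + 1)" if "w \<in> nbhd V E v" for w
    proof
      show "length (fnn_fun (gl_msg L) (x v @ x w)) = gl_r L" by (simp add: length_fnn_fun gl_r_def)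
      have wcn: "w \<in> cnbhd V E v" using that by (simp add: cnbhd_def)
      have lxw: "length (x w) = gl_p L" using len nbV that by blast
      have "linf (x v @ x w) \<le> s"
      proof (rule linf_le)
        fix y assume "y \<in> set (x v @ x w)"
        then show "\<bar>y\<bar> \<le> s" using linf_mem[of y "x v"] linf_mem[of y "x w"] xs[OF vcn] xs[OF wcn] by auto
      qed (rule s0)
      then show "linf (fnn_fun (gl_msg L) (x v @ x w)) \<le> Km * (s + 1)"
        using Km[of "x v @ x w"] lxv lxw Km0 by (smt (verit, best) length_append mult_left_mono mult_2)
    qed
    define ag where "ag = aggregate (gl_agg L) (gl_r L)
                (image_mset (\<lambda>w. fnn_fun (gl_msg L) (x v @ x w)) (mset_set (nbhd V E v)))"
    have agb: "linf ag \<le> D * (Km * (s + 1))"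
      unfolding ag_def D_def d_def deg_def
      by (rule agg_bound[OF finnb]) (use Km0 s0 msgb in auto)
    have "linf (x v @ ag) \<le> s + D * (Km * (s + 1))"
    proof (rule linf_le)
      fix y assume "y \<in> set (x v @ ag)"
      then show "\<bar>y\<bar> \<le> s + D * (Km * (s + 1))"
        using linf_mem[of y "x v"] linf_mem[of y ag] xs[OF vcn] agb linf_ge0[of ag] s0 by auto
    qed (use s0 D1 Km0 in simp)
    moreover have "length (x v @ ag) = gl_p L + gl_r L" using lxv by (simp add: ag_def length_aggregate)
    ultimately have "linf (layer_apply L V E x v) \<le> Kc * (s + D * (Km * (s + 1)) + 1)"
      using Kc[of "x v @ ag"] Kc0 unfolding layer_apply_def ag_def
      by (smt (verit, best) mult_left_mono)
    also have "\<dots> \<le> Kc * (D * (s + 1) + D * (Km * (s + 1)))"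
      using D1 s0 Kc0 by (intro mult_left_mono) (auto simp: mult_le_cancel_right1)
    also have "\<dots> = (Kc * (Km + 1)) * (s + 1) * D" by (simp add: algebra_simps)
    also have "\<dots> \<le> real \<gamma> * (s + 1) * D"
      using \<gamma> s0 D1 by (intro mult_right_mono) auto
    finally show "linf (layer_apply L V E x v) \<le> real \<gamma> * (sig_norm x (cnbhd V E v) + 1) * real (max (deg V E v) 1)"
      by (simp add: s_def D_def d_def)
    have sV: "s \<le> sig_norm x V"
      unfolding s_def sig_norm_def using cnV finV vcn by (intro Max_mono) auto
    have "nbhd V E v \<subseteq> V - {v}" using nbV noloop by (auto simp: nbhd_def)
    then have "d \<le> card (V - {v})" unfolding d_def deg_def using finV by (intro card_mono) auto
    moreover have "card (V - {v}) < card V" using finV v by (meson card_Diff1_less)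
    moreover have "1 \<le> card V" using finV v by (metis card_0_eq empty_iff less_one linorder_not_le)
    ultimately have "D \<le> real (card V)" unfolding D_def by simp
    then show "real \<gamma> * (sig_norm x (cnbhd V E v) + 1) * real (max (deg V E v) 1)
         \<le> real \<gamma> * (sig_norm x V + 1) * real (card V)"
      using sV s0 D1 unfolding s_def[symmetric] d_def[symmetric] D_def[symmetric]
      by (intro mult_mono) auto
  qed
qed

end
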